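(* (i) If $(A,W)$ is a Pratt comonoid, then so is $(A,W^\neg)$, where $W^\neg=\{A-w\mid w\in W\}$; and if $(A,W)$ is $T_1$, so is $(A,W^\neg)$. (ii) If $\{(A,W_i)\mid i\in I\}$ is a (finite or infinite) set of Pratt comonoids with the same base-set $A$, then $(A,\bigcap_{i\in I}W_i)$ is a Pratt comonoid. (iii) If $f:A\to A'$ is a map of sets and $(A,W)$ is a Pratt comonoid, and $W'=\{w\subseteq A'\mid f^{-1}(w)\in W\}$, then $(A',W')$ is a Pratt comonoid. (iv) If $(A,W)$ is a Pratt comonoid and $u\subseteq v$ are elements of $W$, then $(A_{u,v},W_{u,v})$ is a Pratt comonoid, where $A_{u,v}=v-u$ and $W_{u,v}=\{x-u\mid x\in W,\ u\subseteq x\subseteq v\}$.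
   Context: A Pratt comonoid is a pair $(A,W)$ where $A$ is a set and $W$ is a set of subsets of $A$ such that (i) $\emptyset\in W$ and $A\in W$; (ii) whenever $C\subseteq A\times A$ is such that for every $a\in A$ both the $a$-th row $\{b\mid (a,b)\in C\}$ and the $a$-th column $\{b\mid (b,a)\in C\}$ belong to $W$ (a crossword over $W$), the diagonal $\{b\mid (b,b)\in C\}$ also belongs to $W$. $A$ is called the base-set. $(A,W)$ is $T_1$ if for all distinct $a,b\in A$ some member of $W$ contains $a$ but not $b$. *)

theory Defs
  imports Main
begin

definition crossword :: "'a set \<Rightarrow> 'a set set \<Rightarrow> ('a \<times> 'a) set \<Rightarrow> bool" where
  "crossword A W C \<longleftrightarrow> C \<subseteq> A \<times> A \<and>
     (\<forall>a\<in>A. {b. (a, b) \<in> C} \<in> W \<and> {b. (b, a) \<in> C} \<in> W)"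

definition pratt_comonoid :: "'a set \<Rightarrow> 'a set set \<Rightarrow> bool" where
  "pratt_comonoid A W \<longleftrightarrow> W \<subseteq> Pow A \<and> {} \<in> W \<and> A \<in> W \<and>
     (\<forall>C. crossword A W C \<longrightarrow> {b. (b, b) \<in> C} \<in> W)"

definition T1 :: "'a set \<Rightarrow> 'a set set \<Rightarrow> bool" where
  "T1 A W \<longleftrightarrow> (\<forall>a\<in>A. \<forall>b\<in>A. a \<noteq> b \<longrightarrow> (\<exists>w\<in>W. a \<in> w \<and> b \<notin> w))"

end

theory Submission
  imports Defs
begin

lemma part1:
  assumes P: "pratt_comonoid A W"
  shows "pratt_comonoid A ((\<lambda>w. A - w) ` W) \<and> (T1 A W \<longrightarrow> T1 A ((\<lambda>w. A - w) ` W))"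
proof -
  have sub: "W \<subseteq> Pow A" "{} \<in> W" "A \<in> W"
    and cw: "\<And>C. crossword A W C \<Longrightarrow> {b. (b, b) \<in> C} \<in> W"
    using P unfolding pratt_comonoid_def by auto
  have memc: "\<And>s. s \<in> (\<lambda>w. A - w) ` W \<Longrightarrow> A - s \<in> W"
  proof -
    fix s assume "s \<in> (\<lambda>w. A - w) ` W"
    then obtain w where "w \<in> W" "s = A - w" by auto
    moreover have "w \<subseteq> A" using sub \<open>w \<in> W\<close> by auto
    ultimately show "A - s \<in> W" by (simp add: Diff_Diff_Int Int_absorb1 inf.absorb2)
  qed
  have "pratt_comonoid A ((\<lambda>w. A - w) ` W)"
    unfolding pratt_comonoid_def
  proof (intro conjI allI impI)
    show "(\<lambda>w. A - w) ` W \<subseteq> Pow A" by auto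
    show "{} \<in> (\<lambda>w. A - w) ` W" using sub by (intro image_eqI[of _ _ A]) auto
    show "A \<in> (\<lambda>w. A - w) ` W" using sub by (intro image_eqI[of _ _ "{}"]) auto
  next
    fix C assume c: "crossword A ((\<lambda>w. A - w) ` W) C"
    define D where "D = A \<times> A - C"
    have "crossword A W D" unfolding crossword_def
    proof (intro conjI ballI)
      show "D \<subseteq> A \<times> A" unfolding D_def by auto
    next
      fix a assume a: "a \<in> A"
      have r: "{b. (a, b) \<in> C} \<in> (\<lambda>w. A - w) ` W" and cl: "{b. (b, a) \<in> C} \<in> (\<lambda>w. A - w) ` W"
        using c a unfolding crossword_def by auto
      have "{b. (a, b) \<in> D} = A - {b. (a, b) \<in> C}" using a unfolding D_def by auto
      then show "{b. (a, b) \<in> D} \<in> W" using memc[OF r] by simp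
      have "{b. (b, a) \<in> D} = A - {b. (b, a) \<in> C}" using a unfolding D_def by auto
      then show "{b. (b, a) \<in> D} \<in> W" using memc[OF cl] by simp
    qed
    then have d: "{b. (b, b) \<in> D} \<in> W" by (rule cw)
    have "C \<subseteq> A \<times> A" using c unfolding crossword_def by auto
    then have "{b. (b, b) \<in> C} = A - {b. (b, b) \<in> D}" unfolding D_def by auto
    then show "{b. (b, b) \<in> C} \<in> (\<lambda>w. A - w) ` W" using d by auto
  qed
  moreover have "T1 A W \<longrightarrow> T1 A ((\<lambda>w. A - w) ` W)"
  proof
    assume t: "T1 A W"
    show "T1 A ((\<lambda>w. A - w) ` W)" unfolding T1_def
    proof (intro ballI impI)
      fix a b assume "a \<in> A" "b \<in> A" "a \<noteq> b"
      then obtain w where "w \<in> W" "b \<in> w" "a \<notin> w" using t unfolding T1_def by metis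
      then show "\<exists>w\<in>(\<lambda>w. A - w) ` W. a \<in> w \<and> b \<notin> w" using \<open>a \<in> A\<close> by auto
    qed
  qed
  ultimately show ?thesis by blast
qed

lemma part2:
  assumes "\<forall>i\<in>I. pratt_comonoid A (W i)"
  shows "pratt_comonoid A (Pow A \<inter> (\<Inter>i\<in>I. W i))"
  unfolding pratt_comonoid_def
proof (intro conjI allI impI)
  show "Pow A \<inter> (\<Inter>i\<in>I. W i) \<subseteq> Pow A" by auto
  show "{} \<in> Pow A \<inter> (\<Inter>i\<in>I. W i)" using assms unfolding pratt_comonoid_def by auto
  show "A \<in> Pow A \<inter> (\<Inter>i\<in>I. W i)" using assms unfolding pratt_comonoid_def by auto
next
  fix C assume c: "crossword A (Pow A \<inter> (\<Inter>i\<in>I. W i)) C"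
  then have cs: "C \<subseteq> A \<times> A" unfolding crossword_def by auto
  have "\<And>i. i \<in> I \<Longrightarrow> crossword A (W i) C" using c unfolding crossword_def by auto
  then have "\<And>i. i \<in> I \<Longrightarrow> {b. (b, b) \<in> C} \<in> W i" using assms unfolding pratt_comonoid_def by blast
  moreover have "{b. (b, b) \<in> C} \<subseteq> A" using cs by auto
  ultimately show "{b. (b, b) \<in> C} \<in> Pow A \<inter> (\<Inter>i\<in>I. W i)" by auto
qed

lemma part3:
  assumes fA: "f ` A \<subseteq> A'" and P: "pratt_comonoid A W"
  shows "pratt_comonoid A' {w. w \<subseteq> A' \<and> (A \<inter> f -` w) \<in> W}"
  unfolding pratt_comonoid_def
proof (intro conjI allI impI)
  show "{w. w \<subseteq> A' \<and> (A \<inter> f -` w) \<in> W} \<subseteq> Pow A'" by auto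
  show "{} \<in> {w. w \<subseteq> A' \<and> (A \<inter> f -` w) \<in> W}" using P unfolding pratt_comonoid_def by auto
  have "A \<inter> f -` A' = A" using fA by auto
  then show "A' \<in> {w. w \<subseteq> A' \<and> (A \<inter> f -` w) \<in> W}" using P unfolding pratt_comonoid_def by auto
next
  fix C assume c: "crossword A' {w. w \<subseteq> A' \<and> (A \<inter> f -` w) \<in> W} C"
  define D where "D = {(a, b). a \<in> A \<and> b \<in> A \<and> (f a, f b) \<in> C}"
  have "crossword A W D" unfolding crossword_def
  proof (intro conjI ballI)
    show "D \<subseteq> A \<times> A" unfolding D_def by auto
  next
    fix a assume a: "a \<in> A"
    then have fa: "f a \<in> A'" using fA by auto
    have "A \<inter> f -` {b. (f a, b) \<in> C} \<in> W" using c fa unfolding crossword_def by auto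
    moreover have "{b. (a, b) \<in> D} = A \<inter> f -` {b. (f a, b) \<in> C}" using a unfolding D_def by auto
    ultimately show "{b. (a, b) \<in> D} \<in> W" by simp
    have "A \<inter> f -` {b. (b, f a) \<in> C} \<in> W" using c fa unfolding crossword_def by auto
    moreover have "{b. (b, a) \<in> D} = A \<inter> f -` {b. (b, f a) \<in> C}" using a unfolding D_def by auto
    ultimately show "{b. (b, a) \<in> D} \<in> W" by simp
  qed
  then have "{b. (b, b) \<in> D} \<in> W" using P unfolding pratt_comonoid_def by blast
  moreover have "{b. (b, b) \<in> D} = A \<inter> f -` {b. (b, b) \<in> C}" unfolding D_def by auto
  moreover have "{b. (b, b) \<in> C} \<subseteq> A'" using c unfolding crossword_def by auto
  ultimately show "{b. (b, b) \<in> C} \<in> {w. w \<subseteq> A' \<and> (A \<inter> f -` w) \<in> W}" by simp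
qed

lemma part4:
  assumes P: "pratt_comonoid A W" and uW: "u \<in> W" and vW: "v \<in> W" and uv: "u \<subseteq> v"
  shows "pratt_comonoid (v - u) {x - u | x. x \<in> W \<and> u \<subseteq> x \<and> x \<subseteq> v}"
proof -
  have vA: "v \<subseteq> A" using P vW unfolding pratt_comonoid_def by auto
  have AW: "A \<in> W" using P unfolding pratt_comonoid_def by auto
  let ?W = "{x - u | x. x \<in> W \<and> u \<subseteq> x \<and> x \<subseteq> v}"
  have key: "\<And>s. s \<in> ?W \<Longrightarrow> s \<union> u \<in> W"
  proof -
    fix s assume "s \<in> ?W"
    then obtain x where "s = x - u" "x \<in> W" "u \<subseteq> x" by auto
    then have "s \<union> u = x" by auto
    then show "s \<union> u \<in> W" using \<open>x \<in> W\<close> by simp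
  qed
  show ?thesis unfolding pratt_comonoid_def
  proof (intro conjI allI impI)
  show "?W \<subseteq> Pow (v - u)" by auto
  show "{} \<in> ?W" using uW uv by auto
  show "v - u \<in> ?W" using vW uv by auto
next
  fix C assume c: "crossword (v - u) ?W C"
  then have cs: "C \<subseteq> (v - u) \<times> (v - u)" unfolding crossword_def by auto
  define D where "D = C \<union> (A \<times> u) \<union> (u \<times> A)"
  have "crossword A W D" unfolding crossword_def
  proof (rule conjI)
    show "D \<subseteq> A \<times> A" unfolding D_def using cs vA uv by auto
  next
    show "\<forall>a\<in>A. {b. (a, b) \<in> D} \<in> W \<and> {b. (b, a) \<in> D} \<in> W"
    proof
    fix a assume a: "a \<in> A"
    consider "a \<in> v - u" | "a \<in> u" | "a \<notin> v" using uv by blast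
    then show "{b. (a, b) \<in> D} \<in> W \<and> {b. (b, a) \<in> D} \<in> W"
    proof cases
      case 1
      have r: "{b. (a, b) \<in> C} \<in> ?W" and cl: "{b. (b, a) \<in> C} \<in> ?W"
        using c 1 unfolding crossword_def by auto
      have "{b. (a, b) \<in> D} = {b. (a, b) \<in> C} \<union> u" using a 1 unfolding D_def by auto
      moreover have "{b. (b, a) \<in> D} = {b. (b, a) \<in> C} \<union> u" using a 1 unfolding D_def by auto
      ultimately show ?thesis using key[OF r] key[OF cl] by simp
    next
      case 2
      have "{b. (a, b) \<in> D} = A" "{b. (b, a) \<in> D} = A" using a 2 cs vA uv unfolding D_def by auto
      then show ?thesis using AW by simp
    next
      case 3
      have "{b. (a, b) \<in> D} = u" "{b. (b, a) \<in> D} = u" using a 3 cs uv unfolding D_def by auto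
      then show ?thesis using uW by simp
    qed
    qed
  qed
  then have d: "{b. (b, b) \<in> D} \<in> W" using P unfolding pratt_comonoid_def by blast
  have e: "{b. (b, b) \<in> D} = {b. (b, b) \<in> C} \<union> u" using uv vA unfolding D_def by auto
  have "{b. (b, b) \<in> C} = ({b. (b, b) \<in> C} \<union> u) - u" using cs by auto
  moreover have "{b. (b, b) \<in> C} \<union> u \<subseteq> v" using cs uv by auto
  ultimately show "{b. (b, b) \<in> C} \<in> ?W" using d e by blast
qed
qed

theorem lemma2p2:
  shows
  "(\<forall>(A :: 'a set) W. pratt_comonoid A W \<longrightarrow>
       pratt_comonoid A ((\<lambda>w. A - w) ` W) \<and>
       (T1 A W \<longrightarrow> T1 A ((\<lambda>w. A - w) ` W)))
   \<and> (\<forall>(A :: 'a set) (I :: 'i set) (W :: 'i \<Rightarrow> 'a set set).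
       (\<forall>i\<in>I. pratt_comonoid A (W i)) \<longrightarrow>
       pratt_comonoid A (Pow A \<inter> (\<Inter>i\<in>I. W i)))
   \<and> (\<forall>(A :: 'a set) (A' :: 'b set) (f :: 'a \<Rightarrow> 'b) W.
       f ` A \<subseteq> A' \<longrightarrow> pratt_comonoid A W \<longrightarrow>
       pratt_comonoid A' {w. w \<subseteq> A' \<and> (A \<inter> f -` w) \<in> W})
   \<and> (\<forall>(A :: 'a set) W u v. pratt_comonoid A W \<longrightarrow> u \<in> W \<longrightarrow> v \<in> W \<longrightarrow> u \<subseteq> v \<longrightarrow>
       pratt_comonoid (v - u) {x - u | x. x \<in> W \<and> u \<subseteq> x \<and> x \<subseteq> v})"
proof (intro conjI)
  show "\<forall>(A :: 'a set) W. pratt_comonoid A W \<longrightarrow>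
       pratt_comonoid A ((\<lambda>w. A - w) ` W) \<and>
       (T1 A W \<longrightarrow> T1 A ((\<lambda>w. A - w) ` W))"
    by (intro allI impI part1)
  show "\<forall>(A :: 'a set) (I :: 'i set) (W :: 'i \<Rightarrow> 'a set set).
       (\<forall>i\<in>I. pratt_comonoid A (W i)) \<longrightarrow>
       pratt_comonoid A (Pow A \<inter> (\<Inter>i\<in>I. W i))"
    by (intro allI impI part2)
  show "\<forall>(A :: 'a set) (A' :: 'b set) (f :: 'a \<Rightarrow> 'b) W.
       f ` A \<subseteq> A' \<longrightarrow> pratt_comonoid A W \<longrightarrow>
       pratt_comonoid A' {w. w \<subseteq> A' \<and> (A \<inter> f -` w) \<in> W}"
    by (intro allI impI part3)
  show "\<forall>(A :: 'a set) W u v. pratt_comonoid A W \<longrightarrow> u \<in> W \<longrightarrow> v \<in> W \<longrightarrow> u \<subseteq> v \<longrightarrow>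
       pratt_comonoid (v - u) {x - u | x. x \<in> W \<and> u \<subseteq> x \<and> x \<subseteq> v}"
    by (intro allI impI part4)
qed

end
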